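(* Every finite nonempty inverse semigroup is $K$-thin.
   Context: An inverse semigroup is a semigroup in which every element $x$ has a unique $y$ with $xyx=x$ and $yxy=y$. For a finite nonempty semigroup $S$, the minimal ideal $K(S)$ is the intersection of all nonempty two-sided ideals of $S$. A Rees matrix semigroup $\mathcal{M}(H;I,J;p)$, for sets $I,J$, a group $H$ and a function $p\colon J\times I\to H$, is the set $I\times H\times J$ with product $(i,h,j)(i',h',j')=(i,h\,p(j,i')\,h',j')$. It is known that $K(S)$ is always isomorphic to such a Rees matrix semigroup with $H$ a finite group and $p$ normalized (i.e. $p(j_0,i)=e_H$ and $p(j,i_0)=e_H$ for some fixed $i_0\in I$, $j_0\in J$ and all $i,j$). $S$ is called $K$-thin if $K(S)$ has such a normalized Rees matrix structure with $|I|=1$ or $|J|=1$; equivalently, $K(S)$ is left-simple or right-simple. *)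

theory Defs
  imports Main
begin

text \<open>A semigroup is modelled as a type of class semigroup_mult; the whole type is the semigroup.\<close>

definition inverse_semigroup :: "('a::semigroup_mult) itself \<Rightarrow> bool" where
  "inverse_semigroup _ \<longleftrightarrow> (\<forall>x::'a. \<exists>!y. x * y * x = x \<and> y * x * y = y)"

definition two_sided_ideal :: "('a::semigroup_mult) set \<Rightarrow> bool" where
  "two_sided_ideal A \<longleftrightarrow> A \<noteq> {} \<and> (\<forall>s a. a \<in> A \<longrightarrow> s * a \<in> A \<and> a * s \<in> A)"

definition minimal_ideal :: "('a::semigroup_mult) set" where
  "minimal_ideal = \<Inter> {A. two_sided_ideal A}"

definition left_ideal_of :: "('a::semigroup_mult) set \<Rightarrow> 'a set \<Rightarrow> bool" where
  "left_ideal_of K L \<longleftrightarrow> L \<noteq> {} \<and> L \<subseteq> K \<and> (\<forall>k\<in>K. \<forall>l\<in>L. k * l \<in> L)"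

definition right_ideal_of :: "('a::semigroup_mult) set \<Rightarrow> 'a set \<Rightarrow> bool" where
  "right_ideal_of K R \<longleftrightarrow> R \<noteq> {} \<and> R \<subseteq> K \<and> (\<forall>k\<in>K. \<forall>r\<in>R. r * k \<in> R)"

definition left_simple :: "('a::semigroup_mult) set \<Rightarrow> bool" where
  "left_simple K \<longleftrightarrow> (\<forall>L. left_ideal_of K L \<longrightarrow> L = K)"

definition right_simple :: "('a::semigroup_mult) set \<Rightarrow> bool" where
  "right_simple K \<longleftrightarrow> (\<forall>R. right_ideal_of K R \<longrightarrow> R = K)"

definition K_thin :: "('a::semigroup_mult) itself \<Rightarrow> bool" where
  "K_thin _ \<longleftrightarrow> left_simple (minimal_ideal :: 'a set) \<or> right_simple (minimal_ideal :: 'a set)"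

end

theory Submission
  imports Defs
begin

definition inv_s :: "'a::semigroup_mult \<Rightarrow> 'a" where
  "inv_s x = (THE y. x*y*x = x \<and> y*x*y = y)"

lemma inv_props:
  assumes I: "inverse_semigroup TYPE('a::semigroup_mult)"
  shows "x * inv_s x * x = x \<and> inv_s x * x * inv_s x = (inv_s x :: 'a)"
proof -
  from I have "\<exists>!y. x*y*x = x \<and> y*x*y = y" by (simp add: inverse_semigroup_def)
  then show ?thesis unfolding inv_s_def by (rule theI')
qed

lemma inv_uniq:
  assumes I: "inverse_semigroup TYPE('a::semigroup_mult)"
  and "x*y*x = x" "y*x*y = y" "x*z*x = x" "z*x*z = (z::'a)"
  shows "y = z"
proof -
  from I have "\<exists>!y. x*y*x = x \<and> y*x*y = y" by (simp add: inverse_semigroup_def)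
  then show ?thesis using assms(2-5) by blast
qed

lemma idem_comm:
  assumes I: "inverse_semigroup TYPE('a::semigroup_mult)"
  and e: "e*e = e" and f: "f*f = (f::'a)"
  shows "e*f = f*e"
proof -
  have ee: "e*(e*X) = e*X" for X by (metis mult.assoc e)
  have ff: "f*(f*X) = f*X" for X by (metis mult.assoc f)
  define z where "z = inv_s (e*f)"
  have z1: "e*(f*(z*(e*f))) = e*f" and z2: "z*(e*(f*z)) = z"
    using inv_props[OF I, of "e*f"] unfolding z_def[symmetric] by (simp_all add: mult.assoc)
  have z2X: "z*(e*(f*(z*X))) = z*X" for X by (metis mult.assoc z2)
  define w where "w = f*z*e"
  have w1: "e*f*w*(e*f) = e*f" unfolding w_def by (simp add: mult.assoc ee ff z1)
  have w2: "w*(e*f)*w = w" unfolding w_def by (simp add: mult.assoc ee ff z2X)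
  have zw: "w = z"
    by (rule inv_uniq[OF I w1 w2]) (use z1 z2 in \<open>simp_all add: mult.assoc\<close>)
  have zz: "z*z = z"
  proof -
    have "w*w = w" unfolding w_def by (simp add: mult.assoc z2X)
    then show ?thesis using zw by simp
  qed
  have efz: "e*f = z"
  proof (rule inv_uniq[OF I, of "z"])
    have zzz: "z*z*z = z" using zz by simp
    show "z * (e*f) * z = z" "(e*f)*z*(e*f) = e*f" using z1 z2 by (simp_all add: mult.assoc)
    show "z * z * z = z" by (rule zzz)
    show "z * z * z = z" by (rule zzz)
  qed
  have efi: "(e*f)*(e*f) = e*f" using efz zz by simp
  define z' where "z' = inv_s (f*e)"
  have z1': "f*(e*(z'*(f*e))) = f*e" and z2': "z'*(f*(e*z')) = z'"
    using inv_props[OF I, of "f*e"] unfolding z'_def[symmetric] by (simp_all add: mult.assoc)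
  have z2X': "z'*(f*(e*(z'*X))) = z'*X" for X by (metis mult.assoc z2')
  define w' where "w' = e*z'*f"
  have w1': "f*e*w'*(f*e) = f*e" unfolding w'_def by (simp add: mult.assoc ee ff z1')
  have w2': "w'*(f*e)*w' = w'" unfolding w'_def by (simp add: mult.assoc ee ff z2X')
  have zw': "w' = z'"
    by (rule inv_uniq[OF I w1' w2']) (use z1' z2' in \<open>simp_all add: mult.assoc\<close>)
  have zz': "z'*z' = z'"
  proof -
    have "w'*w' = w'" unfolding w'_def by (simp add: mult.assoc z2X')
    then show ?thesis using zw' by simp
  qed
  have fez: "f*e = z'"
  proof (rule inv_uniq[OF I, of "z'"])
    have zzz: "z'*z'*z' = z'" using zz' by simp
    show "z' * (f*e) * z' = z'" "(f*e)*z'*(f*e) = f*e" using z1' z2' by (simp_all add: mult.assoc)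
    show "z' * z' * z' = z'" by (rule zzz)
    show "z' * z' * z' = z'" by (rule zzz)
  qed
  have fei: "(f*e)*(f*e) = f*e" using fez zz' by simp
  have a: "(e*f)*(f*e)*(e*f) = e*f" using efi by (simp add: mult.assoc ff ee)
  have b: "(f*e)*(e*f)*(f*e) = f*e" using fei by (simp add: mult.assoc ff ee)
  have c: "(e*f)*(e*f)*(e*f) = e*f" using efi by simp
  show ?thesis using inv_uniq[OF I a b c c] by simp
qed


lemma K_closed:
  assumes "a \<in> (minimal_ideal :: 'a::semigroup_mult set)"
  shows "s*a \<in> minimal_ideal \<and> a*s \<in> minimal_ideal"
  using assms unfolding minimal_ideal_def two_sided_ideal_def by blast

lemma K_sub:
  "(minimal_ideal :: 'a::semigroup_mult set) \<subseteq> {x*g*y | x y. True}"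
proof -
  have "two_sided_ideal {x*g*y | x y. True}"
    unfolding two_sided_ideal_def
    by (auto simp: mult.assoc) (metis mult.assoc)+
  then show ?thesis unfolding minimal_ideal_def by blast
qed

lemma K_nonempty:
  "(minimal_ideal :: 'a::{semigroup_mult,finite} set) \<noteq> {}"
proof -
  have fin: "finite {A::'a set. two_sided_ideal A}" by simp
  have "F \<subseteq> {A::'a set. two_sided_ideal A} \<Longrightarrow> \<exists>z. \<forall>A\<in>F. z \<in> A" if "finite F" for F
    using that
  proof (induction F rule: finite_induct)
    case empty
    then show ?case by simp
  next
    case (insert A F)
    then obtain z where z: "\<forall>B\<in>F. z \<in> B" by auto
    from insert have "two_sided_ideal A" by auto
    then obtain a where a: "a \<in> A" unfolding two_sided_ideal_def by auto
    have "z*a \<in> A" using a \<open>two_sided_ideal A\<close> unfolding two_sided_ideal_def by auto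
    moreover have "\<forall>B\<in>F. z*a \<in> B" using z insert.prems unfolding two_sided_ideal_def by auto
    ultimately show ?case by auto
  qed
  from this[OF fin] show ?thesis unfolding minimal_ideal_def by auto
qed

lemma card_arg:
  assumes ae: "a*b = e" and bf: "b*a = f" and bab: "b*a*b = b" and ee: "e*e = e"
    and fe: "e*f = f" "f*e = (f::'a::{semigroup_mult,finite})"
  shows "f = e"
proof -
  let ?E = "range (\<lambda>s. e*s)" and ?F = "range (\<lambda>s. f*s)"
  have FE: "?F \<subseteq> ?E"
  proof
    fix y assume "y \<in> ?F"
    then obtain s where "y = f*s" by auto
    then have "y = e*(f*s)" using fe(1) by (simp flip: mult.assoc)
    then show "y \<in> ?E" by auto
  qed
  have maps: "(\<lambda>z. b*z) ` ?E \<subseteq> ?F"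
  proof
    fix y assume "y \<in> (\<lambda>z. b*z) ` ?E"
    then obtain s where "y = b*(e*s)" by auto
    also have "... = (b*a*b)*s" using ae by (simp add: mult.assoc)
    also have "... = b*s" using bab by simp
    also have "... = (b*a*b)*s" using bab by simp
    also have "... = f*(b*s)" using bf by (simp add: mult.assoc)
    finally show "y \<in> ?F" by auto
  qed
  have inj: "inj_on (\<lambda>z. b*z) ?E"
  proof
    fix x y assume "x \<in> ?E" "y \<in> ?E" and bxy: "b*x = b*y"
    then obtain s t where xs: "x = e*s" and yt: "y = e*t" by auto
    have ex: "e*x = x" using xs ee by (simp flip: mult.assoc)
    have ey: "e*y = y" using yt ee by (simp flip: mult.assoc)
    have "x = (a*b)*x" using ex ae by simp
    also have "... = a*(b*y)" using bxy by (simp add: mult.assoc)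
    also have "... = (a*b)*y" by (simp add: mult.assoc)
    also have "... = y" using ey ae by simp
    finally show "x = y" .
  qed
  have "card ?E \<le> card ?F" using card_inj_on_le[OF inj maps] by simp
  moreover have "card ?F \<le> card ?E" using FE by (intro card_mono) auto
  ultimately have "card ?F = card ?E" by simp
  then have "?F = ?E" using FE by (intro card_subset_eq) auto
  moreover have "e \<in> ?E" using ee by (metis rangeI)
  ultimately have "e \<in> ?F" by simp
  then obtain s where s: "e = f*s" by auto
  have ff: "f*f = f"
  proof -
    have "f*f = (b*a*b)*a" using bf by (simp add: mult.assoc)
    then show ?thesis using bab bf by simp
  qed
  have "f*e = (f*f)*s" using s by (simp add: mult.assoc)
  then have "f*e = e" using s ff by simp
  then show ?thesis using fe by simp
qed

lemma primitive:
  assumes I: "inverse_semigroup TYPE('a::{semigroup_mult,finite})"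
  and eK: "e \<in> (minimal_ideal :: 'a set)" and ee: "e*e = e" and gg: "g*g = g"
  and ge: "e*g = g" "g*e = g"
  shows "g = e"
proof -
  obtain x y where exy: "e = x*g*y" using K_sub eK by blast
  define a where "a = e*x*g"
  define b where "b = g*y*e"
  have eab: "e = a*b"
  proof -
    have "e = e*e*e" using ee by simp
    also have "... = e*(x*(g*g)*y)*e" using exy gg by simp
    finally show ?thesis unfolding a_def b_def by (simp add: mult.assoc)
  qed
  define a' where "a' = inv_s a"
  have i1: "a*a'*a = a" and i2: "a'*a*a' = a'" using inv_props[OF I, of a] a'_def by auto
  have ea: "e*a = a" unfolding a_def using ee by (simp flip: mult.assoc)
  have ag: "a*g = a" unfolding a_def using gg by (simp add: mult.assoc)
  have hh: "(a*a')*(a*a') = a*a'"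
  proof -
    have "(a*a')*(a*a') = (a*a'*a)*a'" by (simp add: mult.assoc)
    then show ?thesis using i1 by simp
  qed
  have h1: "(a*a')*e = e"
  proof -
    have "(a*a')*(a*b) = (a*a'*a)*b" by (simp add: mult.assoc)
    then show ?thesis using i1 eab by simp
  qed
  have h2: "e*(a*a') = a*a'" using ea by (simp flip: mult.assoc)
  have eh: "a*a' = e" using idem_comm[OF I ee hh] h1 h2 by simp
  have ff: "(a'*a)*(a'*a) = a'*a"
  proof -
    have "(a'*a)*(a'*a) = a'*(a*a'*a)" by (simp add: mult.assoc)
    then show ?thesis using i1 by simp
  qed
  have f1: "(a'*a)*g = a'*a" using ag by (simp add: mult.assoc)
  have f2: "g*(a'*a) = a'*a" using idem_comm[OF I gg ff] f1 by simp
  have f3: "e*(a'*a) = a'*a"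
  proof -
    have "e*(g*(a'*a)) = (e*g)*(a'*a)" by (simp add: mult.assoc)
    then show ?thesis using f2 ge by simp
  qed
  have f4: "(a'*a)*e = a'*a"
  proof -
    have "((a'*a)*g)*e = (a'*a)*(g*e)" by (simp add: mult.assoc)
    then show ?thesis using f1 ge by simp
  qed
  have "a'*a = e" by (rule card_arg[OF eh refl i2 ee f3 f4])
  then have "e*g = e" using f1 by simp
  then show ?thesis using ge by simp
qed

lemma idem_K_eq:
  assumes I: "inverse_semigroup TYPE('a::{semigroup_mult,finite})"
  and eK: "e \<in> (minimal_ideal :: 'a set)" and fK: "f \<in> (minimal_ideal :: 'a set)"
  and ee: "e*e = e" and ff: "f*f = f"
  shows "e = f"
proof -
  have c: "e*f = f*e" by (rule idem_comm[OF I ee ff])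
  have gg: "(e*f)*(e*f) = e*f"
  proof -
    have "(e*f)*(e*f) = e*(f*e)*f" by (simp add: mult.assoc)
    also have "... = e*(e*f)*f" using c by simp
    also have "... = (e*e)*(f*f)" by (simp add: mult.assoc)
    finally show ?thesis using ee ff by simp
  qed
  have gg2: "(f*e)*(f*e) = f*e" using gg c by simp
  have "e*f = e"
  proof (rule primitive[OF I eK ee gg])
    show "e*(e*f) = e*f" using ee by (simp flip: mult.assoc)
    have "e*f*e = e*(f*e)" by (simp add: mult.assoc)
    also have "... = e*(e*f)" using c by simp
    also have "... = (e*e)*f" by (simp add: mult.assoc)
    finally show "e*f*e = e*f" using ee by simp
  qed
  moreover have "f*e = f"
  proof (rule primitive[OF I fK ff gg2])
    show "f*(f*e) = f*e" using ff by (simp flip: mult.assoc)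
    have "f*e*f = f*(e*f)" by (simp add: mult.assoc)
    also have "... = f*(f*e)" using c by simp
    also have "... = (f*f)*e" by (simp add: mult.assoc)
    finally show "f*e*f = f*e" using ff by simp
  qed
  ultimately show ?thesis using c by simp
qed

theorem proposition7p11:
  assumes "inverse_semigroup TYPE('a::{semigroup_mult, finite})"
  shows "K_thin TYPE('a)"
proof -
  note I = assms
  have "left_simple (minimal_ideal :: 'a set)"
    unfolding left_simple_def
  proof (intro allI impI)
    fix L :: "'a set" assume L: "left_ideal_of minimal_ideal L"
    then obtain l where lL: "l \<in> L" unfolding left_ideal_of_def by auto
    with L have lK: "l \<in> minimal_ideal" unfolding left_ideal_of_def by auto
    show "L = minimal_ideal"
    proof
      show "L \<subseteq> minimal_ideal" using L unfolding left_ideal_of_def by auto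
      show "minimal_ideal \<subseteq> L"
      proof
        fix k :: 'a assume kK: "k \<in> minimal_ideal"
        have k1: "k * inv_s k * k = k" and l1: "l * inv_s l * l = l"
          using inv_props[OF I] by auto
        have e1: "(inv_s k * k) * (inv_s k * k) = inv_s k * k"
        proof -
          have "(inv_s k * k) * (inv_s k * k) = inv_s k * (k * inv_s k * k)" by (simp add: mult.assoc)
          then show ?thesis using k1 by simp
        qed
        have e2: "(inv_s l * l) * (inv_s l * l) = inv_s l * l"
        proof -
          have "(inv_s l * l) * (inv_s l * l) = inv_s l * (l * inv_s l * l)" by (simp add: mult.assoc)
          then show ?thesis using l1 by simp
        qed
        have "inv_s k * k = inv_s l * l"
          by (rule idem_K_eq[OF I _ _ e1 e2]) (use K_closed kK lK in auto)
        then have keq: "k = (k * inv_s l) * l"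
        proof -
          assume eq: "inv_s k * k = inv_s l * l"
          have "k = k*(inv_s k*k)" using k1 by (simp add: mult.assoc)
          also have "... = k*(inv_s l*l)" using eq by simp
          also have "... = (k*inv_s l)*l" by (simp add: mult.assoc)
          finally show ?thesis .
        qed
        have "k * inv_s l \<in> minimal_ideal" using K_closed kK by auto
        moreover have "\<forall>k\<in>minimal_ideal. \<forall>l\<in>L. k * l \<in> L" using L unfolding left_ideal_of_def by blast
        ultimately have "(k * inv_s l) * l \<in> L" using lL by blast
        then show "k \<in> L" by (subst keq)
      qed
    qed
  qed
  then show ?thesis unfolding K_thin_def by simp
qed

end
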